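(* Let $G=(V,E)$ be a finite graph, $A\subset V$, $\xi_1,\xi_2\in\{-1,1\}^A$ boundary conditions, $h\in\mathbb R^V$ an arbitrary external field and $T>0$. Then for any two increasing events $\mathtt A,\mathtt B\subset\Theta^{\bar G}$, $$\bar\mu^{\xi_1/\xi_2}_{G,h}(\mathtt A\cap\mathtt B)\ge\bar\mu^{\xi_1/\xi_2}_{G,h}(\mathtt A)\,\bar\mu^{\xi_1/\xi_2}_{G,h}(\mathtt B).$$
   Context: Extended Ising model: for a finite graph $G=(V,E)$ let $\bar G=V\cup E$. An extended configuration $\bar\sigma$ assigns $\bar\sigma_v\in\{-1,1\}$ to each $v\in V$ and $\bar\sigma_e\in\{-1,0,1\}$ to each $e\in E$, subject to $|\bar\sigma_v-\bar\sigma_e|\le1$ whenever $v$ is an endpoint of $e$. For $T>0$ and $h\in\mathbb R^V$, $\bar\mu_{G,h}(\bar\sigma)\propto\prod_{e\in E}\prod_{v\in e}W(\bar\sigma_v,\bar\sigma_e)\cdot\exp\big(\frac1T\sum_{v\in V}h_v\bar\sigma_v\big)$, where $W(a,b)=1$ if $b=a$, $W(a,b)=t$ if $b=0$, $W(a,b)=0$ if $b=-a$, and $t=(e^{2/T}-1)^{-1/2}$. For $A\subset V$ and $\xi\in\{-1,1\}^A$, $\bar\mu^{\xi}_{G,h}$ denotes $\bar\mu_{G,h}$ conditioned on $\bar\sigma_v=\xi_v$ for $v\in A$. The product measure $\bar\mu^{\xi_1/\xi_2}_{G,h}=\bar\mu^{\xi_1}_{G,h}\otimes\bar\mu^{\xi_2}_{G,h}$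 is a law on pairs $(\bar\sigma^1,\bar\sigma^2)$, viewed as elements of $\Theta^{\bar G}$ with $\Theta=\{-1,0,1\}^2$ (the value at $u\in\bar G$ is $(\bar\sigma^1_u,\bar\sigma^2_u)$). Partial order on $\Theta$: $(a,b)\succeq(c,d)$ iff $a\ge c$ and $b\le d$; extended coordinatewise to $\Theta^{\bar G}$. An event $\mathtt A\subset\Theta^{\bar G}$ is increasing if $x\in\mathtt A$ and $y\succeq x$ imply $y\in\mathtt A$. *)

theory Defs
  imports Complex_Main
begin

text \<open>Sites of the extended graph: vertices (Inl v) and edges (Inr e).
  A finite simple graph is a finite vertex set V with an edge set E of
  2-element subsets of V.\<close>

type_synonym 'v site = "'v + 'v set"

definition gbar :: "'v set \<Rightarrow> 'v set set \<Rightarrow> 'v site set" where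
  "gbar V E = Inl ` V \<union> Inr ` E"

definition ext_configs :: "'v set \<Rightarrow> 'v set set \<Rightarrow> ('v site \<Rightarrow> int) set" where
  "ext_configs V E = {\<sigma>.
     (\<forall>v\<in>V. \<sigma> (Inl v) \<in> {-1, 1}) \<and>
     (\<forall>e\<in>E. \<sigma> (Inr e) \<in> {-1, 0, 1}) \<and>
     (\<forall>e\<in>E. \<forall>v\<in>e. \<bar>\<sigma> (Inl v) - \<sigma> (Inr e)\<bar> \<le> 1) \<and>
     (\<forall>u. u \<notin> gbar V E \<longrightarrow> \<sigma> u = 0)}"

definition ising_t :: "real \<Rightarrow> real" where
  "ising_t T = 1 / sqrt (exp (2 / T) - 1)"

definition Wt :: "real \<Rightarrow> int \<Rightarrow> int \<Rightarrow> real" where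
  "Wt t a b = (if b = a then 1 else if b = 0 then t else 0)"

definition ext_weight :: "'v set \<Rightarrow> 'v set set \<Rightarrow> real \<Rightarrow> ('v \<Rightarrow> real) \<Rightarrow> ('v site \<Rightarrow> int) \<Rightarrow> real" where
  "ext_weight V E T h \<sigma> =
     (\<Prod>e\<in>E. \<Prod>v\<in>e. Wt (ising_t T) (\<sigma> (Inl v)) (\<sigma> (Inr e))) *
     exp ((1 / T) * (\<Sum>v\<in>V. h v * of_int (\<sigma> (Inl v))))"

definition bc_configs :: "'v set \<Rightarrow> 'v set set \<Rightarrow> 'v set \<Rightarrow> ('v \<Rightarrow> int) \<Rightarrow> ('v site \<Rightarrow> int) set" where
  "bc_configs V E A \<xi> = {\<sigma> \<in> ext_configs V E. \<forall>v\<in>A. \<sigma> (Inl v) = \<xi> v}"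

definition ext_mu :: "'v set \<Rightarrow> 'v set set \<Rightarrow> real \<Rightarrow> ('v \<Rightarrow> real) \<Rightarrow> 'v set \<Rightarrow> ('v \<Rightarrow> int)
    \<Rightarrow> ('v site \<Rightarrow> int) \<Rightarrow> real" where
  "ext_mu V E T h A \<xi> \<sigma> =
     (if \<sigma> \<in> bc_configs V E A \<xi>
      then ext_weight V E T h \<sigma> / (\<Sum>\<tau>\<in>bc_configs V E A \<xi>. ext_weight V E T h \<tau>)
      else 0)"

definition Theta_G :: "'v set \<Rightarrow> 'v set set \<Rightarrow> ('v site \<Rightarrow> int \<times> int) set" where
  "Theta_G V E = {x.
     (\<forall>u\<in>gbar V E. fst (x u) \<in> {-1, 0, 1} \<and> snd (x u) \<in> {-1, 0, 1}) \<and>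
     (\<forall>u. u \<notin> gbar V E \<longrightarrow> x u = (0, 0))}"

definition theta_ge :: "int \<times> int \<Rightarrow> int \<times> int \<Rightarrow> bool" where
  "theta_ge p q \<longleftrightarrow> fst p \<ge> fst q \<and> snd p \<le> snd q"

definition increasing_event :: "'v set \<Rightarrow> 'v set set \<Rightarrow> ('v site \<Rightarrow> int \<times> int) set \<Rightarrow> bool" where
  "increasing_event V E Ev \<longleftrightarrow> Ev \<subseteq> Theta_G V E \<and>
     (\<forall>x\<in>Ev. \<forall>y\<in>Theta_G V E. (\<forall>u\<in>gbar V E. theta_ge (y u) (x u)) \<longrightarrow> y \<in> Ev)"

definition pair_config :: "('v site \<Rightarrow> int) \<Rightarrow> ('v site \<Rightarrow> int) \<Rightarrow> ('v site \<Rightarrow> int \<times> int)" where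
  "pair_config \<sigma>1 \<sigma>2 = (\<lambda>u. (\<sigma>1 u, \<sigma>2 u))"

definition prod_prob :: "'v set \<Rightarrow> 'v set set \<Rightarrow> real \<Rightarrow> ('v \<Rightarrow> real) \<Rightarrow> 'v set
    \<Rightarrow> ('v \<Rightarrow> int) \<Rightarrow> ('v \<Rightarrow> int) \<Rightarrow> ('v site \<Rightarrow> int \<times> int) set \<Rightarrow> real" where
  "prod_prob V E T h A \<xi>1 \<xi>2 Ev =
     (\<Sum>(\<sigma>1, \<sigma>2) \<in> bc_configs V E A \<xi>1 \<times> bc_configs V E A \<xi>2.
        if pair_config \<sigma>1 \<sigma>2 \<in> Ev
        then ext_mu V E T h A \<xi>1 \<sigma>1 * ext_mu V E T h A \<xi>2 \<sigma>2 else 0)"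

end

theory Submission
  imports Defs "HOL-Library.Product_Order"
begin
lemma key2:
  fixes a0 a1 b0 b1 c0 c1 d0 d1 :: real
  assumes nn: "0 \<le> a0" "0 \<le> a1" "0 \<le> b0" "0 \<le> b1" "0 \<le> c0" "0 \<le> c1" "0 \<le> d0" "0 \<le> d1"
    and h: "a0*b0 \<le> c0*d0" "a1*b1 \<le> c1*d1" "a0*b1 \<le> c1*d0" "a1*b0 \<le> c1*d0"
  shows "(a0+a1)*(b0+b1) \<le> (c0+c1)*(d0+d1)"
proof -
  have m: "a0*b1 + a1*b0 \<le> c1*d0 + c0*d1"
  proof (cases "c1*d0 = 0")
    case True
    then have "a0*b1 = 0" "a1*b0 = 0" using h nn by (metis antisym mult_nonneg_nonneg)+
    moreover have "0 \<le> c1*d0 + c0*d1" using nn by simp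
    ultimately show ?thesis by auto
  next
    case False
    define p where "p = c1*d0"
    have pp: "p > 0" using False nn p_def by (simp add: less_le)
    have "0 \<le> (p - a0*b1)*(p - a1*b0)" using h p_def by (intro mult_nonneg_nonneg) auto
    hence "p*(a0*b1 + a1*b0) \<le> p*p + (a0*b0)*(a1*b1)" by (simp add: algebra_simps)
    also have "(a0*b0)*(a1*b1) \<le> (c0*d0)*(c1*d1)"
      by (rule mult_mono) (use h nn in auto)
    also have "(c0*d0)*(c1*d1) = p*(c0*d1)" by (simp add: p_def algebra_simps)
    finally have "p*(a0*b1 + a1*b0) \<le> p*(p + c0*d1)" by (simp add: algebra_simps)
    hence "a0*b1 + a1*b0 \<le> p + c0*d1" using pp by simp
    thus ?thesis by (simp add: p_def)
  qed
  have "(a0+a1)*(b0+b1) = a0*b0 + a1*b1 + (a0*b1 + a1*b0)" by (simp add: algebra_simps)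
  also have "\<dots> \<le> c0*d0 + c1*d1 + (c1*d0 + c0*d1)" using h m by linarith
  also have "\<dots> = (c0+c1)*(d0+d1)" by (simp add: algebra_simps)
  finally show ?thesis .
qed

definition AD :: "'a::lattice set \<Rightarrow> bool" where
  "AD X \<longleftrightarrow> (\<forall>\<alpha> \<beta> \<gamma> \<delta> :: 'a \<Rightarrow> real.
     (\<forall>x. 0 \<le> \<alpha> x \<and> 0 \<le> \<beta> x \<and> 0 \<le> \<gamma> x \<and> 0 \<le> \<delta> x) \<and>
     (\<forall>x\<in>X. \<forall>y\<in>X. \<alpha> x * \<beta> y \<le> \<gamma> (sup x y) * \<delta> (inf x y))
     \<longrightarrow> sum \<alpha> X * sum \<beta> X \<le> sum \<gamma> X * sum \<delta> X)"

lemma ADI: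
  assumes "\<And>\<alpha> \<beta> \<gamma> \<delta> :: 'a \<Rightarrow> real. (\<And>x. 0 \<le> \<alpha> x) \<Longrightarrow> (\<And>x. 0 \<le> \<beta> x) \<Longrightarrow>
     (\<And>x. 0 \<le> \<gamma> x) \<Longrightarrow> (\<And>x. 0 \<le> \<delta> x) \<Longrightarrow>
     (\<And>x y. x\<in>X \<Longrightarrow> y\<in>X \<Longrightarrow> \<alpha> x * \<beta> y \<le> \<gamma> (sup x y) * \<delta> (inf x y)) \<Longrightarrow>
     sum \<alpha> X * sum \<beta> X \<le> sum \<gamma> X * sum \<delta> X"
  shows "AD (X::'a::lattice set)"
  using assms unfolding AD_def by blast

lemma ADD:
  fixes \<alpha> \<beta> \<gamma> \<delta> :: "'a::lattice \<Rightarrow> real"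
  assumes "AD X" "\<And>x. 0 \<le> \<alpha> x" "\<And>x. 0 \<le> \<beta> x" "\<And>x. 0 \<le> \<gamma> x" "\<And>x. 0 \<le> \<delta> x"
    "\<And>x y. x\<in>X \<Longrightarrow> y\<in>X \<Longrightarrow> \<alpha> x * \<beta> y \<le> \<gamma> (sup x y) * \<delta> (inf x y)"
  shows "sum \<alpha> X * sum \<beta> X \<le> sum \<gamma> X * sum \<delta> X"
proof -
  have "(\<forall>x. 0 \<le> \<alpha> x \<and> 0 \<le> \<beta> x \<and> 0 \<le> \<gamma> x \<and> 0 \<le> \<delta> x) \<and>
     (\<forall>x\<in>X. \<forall>y\<in>X. \<alpha> x * \<beta> y \<le> \<gamma> (sup x y) * \<delta> (inf x y))" using assms by auto
  then show ?thesis using assms(1)[unfolded AD_def, rule_format, of \<alpha> \<beta> \<gamma> \<delta>] by blast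
qed

lemma AD_chain:
  fixes X :: "int set"
  assumes "finite X"
  shows "AD X"
proof (rule finite_linorder_max_induct[OF assms])
  show "AD {}" by (auto simp: AD_def)
next
  fix b and A :: "int set"
  assume 2: "finite A" "\<forall>a\<in>A. a < b" "AD A"
  show "AD (insert b A)"
  proof (rule ADI)
    fix \<alpha> \<beta> \<gamma> \<delta> :: "int \<Rightarrow> real"
    assume nn: "\<And>x. 0 \<le> \<alpha> x" "\<And>x. 0 \<le> \<beta> x" "\<And>x. 0 \<le> \<gamma> x" "\<And>x. 0 \<le> \<delta> x"
      and c: "\<And>x y. x\<in>insert b A \<Longrightarrow> y\<in>insert b A \<Longrightarrow> \<alpha> x * \<beta> y \<le> \<gamma> (sup x y) * \<delta> (inf x y)"
    have bA: "b \<notin> A" using 2 by auto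
    show "sum \<alpha> (insert b A) * sum \<beta> (insert b A) \<le> sum \<gamma> (insert b A) * sum \<delta> (insert b A)"
    proof (cases "A = {}")
      case True
      then show ?thesis using c[of b b] by simp
    next
      case False
      define m where "m = Max A"
      have mA: "m \<in> A" using False 2 m_def by simp
      have mb: "m < b" using 2 mA by auto
      have le: "\<And>x. x \<in> A \<Longrightarrow> x \<le> m" using 2 m_def by simp
      define f where "f = (\<lambda>(g::int\<Rightarrow>real) x. g x + (if x = m then g b else 0))"
      have sf: "sum (f g) A = sum g (insert b A)" for g
        using 2 bA mA by (simp add: f_def sum.distrib)
      have "sum (f \<alpha>) A * sum (f \<beta>) A \<le> sum (f \<gamma>) A * sum (f \<delta>) A"
      proof (rule ADD[OF 2(3)])
        have "0 \<le> f g x" if "\<And>x. 0 \<le> g x" for g x using that by (simp add: f_def)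
        then show "\<And>x. 0 \<le> f \<alpha> x" "\<And>x. 0 \<le> f \<beta> x" "\<And>x. 0 \<le> f \<gamma> x" "\<And>x. 0 \<le> f \<delta> x"
          using nn by blast+
        fix x y assume xA: "x \<in> A" and yA: "y \<in> A"
        have xb: "x < b" "y < b" using xA yA 2 by auto
        have fm: "f g m = g m + g b" for g by (simp add: f_def)
        have fo: "z \<noteq> m \<Longrightarrow> f g z = g z" for g z by (simp add: f_def)
        show "f \<alpha> x * f \<beta> y \<le> f \<gamma> (sup x y) * f \<delta> (inf x y)"
        proof (cases "x = m")
          case xm: True
          show ?thesis
          proof (cases "y = m")
            case True
            have "(\<alpha> m + \<alpha> b) * (\<beta> m + \<beta> b) \<le> (\<gamma> m + \<gamma> b) * (\<delta> m + \<delta> b)"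
            proof (rule key2)
              show "\<alpha> m * \<beta> m \<le> \<gamma> m * \<delta> m" using c[of m m] mA by simp
              show "\<alpha> b * \<beta> b \<le> \<gamma> b * \<delta> b" using c[of b b] by simp
              have "sup m b = b" "inf m b = m" "sup b m = b" "inf b m = m" using mb
                by (simp_all add: sup_max inf_min)
              then show "\<alpha> m * \<beta> b \<le> \<gamma> b * \<delta> m" "\<alpha> b * \<beta> m \<le> \<gamma> b * \<delta> m"
                using c[of m b] c[of b m] mA by simp_all
            qed (use nn in auto)
            then show ?thesis using xm True by (simp add: fm)
          next
            case False
            then have ym: "y < m" using le yA by force
            have e: "sup m y = m" "inf m y = y" "sup b y = b" "inf b y = y" using ym mb
              by (simp_all add: sup_max inf_min)
            have "\<alpha> m * \<beta> y \<le> \<gamma> m * \<delta> y" "\<alpha> b * \<beta> y \<le> \<gamma> b * \<delta> y"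
              using c[of m y] c[of b y] mA yA e by simp_all
            then have "(\<alpha> m + \<alpha> b) * \<beta> y \<le> (\<gamma> m + \<gamma> b) * \<delta> y"
              unfolding distrib_right by (rule add_mono)
            then show ?thesis using xm False e by (simp add: fm fo)
          qed
        next
          case xm: False
          then have xm': "x < m" using le xA by force
          show ?thesis
          proof (cases "y = m")
            case True
            have e: "sup x m = m" "inf x m = x" "sup x b = b" "inf x b = x" using xm' mb
              by (simp_all add: sup_max inf_min)
            have "\<alpha> x * \<beta> m \<le> \<gamma> m * \<delta> x" "\<alpha> x * \<beta> b \<le> \<gamma> b * \<delta> x"
              using c[of x m] c[of x b] mA xA e by simp_all
            then have "\<alpha> x * (\<beta> m + \<beta> b) \<le> (\<gamma> m + \<gamma> b) * \<delta> x"
              unfolding distrib_right distrib_left by (rule add_mono)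
            then show ?thesis using xm True e by (simp add: fm fo)
          next
            case False
            then have ym: "y < m" using le yA by force
            have "sup x y \<noteq> m" "inf x y \<noteq> m" using xm' ym
              by (simp_all add: sup_max inf_min max_def min_def)
            then show ?thesis using c[of x y] xA yA xm False by (simp add: fo)
          qed
        qed
      qed
      then show ?thesis by (simp add: sf)
    qed
  qed
qed

lemma AD_prod:
  fixes X :: "'a::lattice set" and Y :: "'b::lattice set"
  assumes "AD X" "AD Y"
  shows "AD (X \<times> Y)"
proof (rule ADI)
  fix \<alpha> \<beta> \<gamma> \<delta> :: "'a\<times>'b \<Rightarrow> real"
  assume nn: "\<And>x. 0 \<le> \<alpha> x" "\<And>x. 0 \<le> \<beta> x" "\<And>x. 0 \<le> \<gamma> x" "\<And>x. 0 \<le> \<delta> x"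
    and c: "\<And>x y. x\<in>X \<times> Y \<Longrightarrow> y\<in>X \<times> Y \<Longrightarrow> \<alpha> x * \<beta> y \<le> \<gamma> (sup x y) * \<delta> (inf x y)"
  define F where "F = (\<lambda>(g::'a\<times>'b \<Rightarrow> real) x. \<Sum>y\<in>Y. g (x,y))"
  have sF: "sum (F g) X = sum g (X \<times> Y)" for g
    unfolding F_def by (simp add: sum.cartesian_product)
  have "sum (F \<alpha>) X * sum (F \<beta>) X \<le> sum (F \<gamma>) X * sum (F \<delta>) X"
  proof (rule ADD[OF assms(1)])
    have "0 \<le> F g x" if "\<And>x. 0 \<le> g x" for g x using that by (simp add: F_def sum_nonneg)
    then show "\<And>x. 0 \<le> F \<alpha> x" "\<And>x. 0 \<le> F \<beta> x" "\<And>x. 0 \<le> F \<gamma> x" "\<And>x. 0 \<le> F \<delta> x"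
      using nn by blast+
    fix x x' assume x: "x \<in> X" "x' \<in> X"
    show "F \<alpha> x * F \<beta> x' \<le> F \<gamma> (sup x x') * F \<delta> (inf x x')"
      unfolding F_def
      by (rule ADD[OF assms(2), where \<alpha>="\<lambda>y. \<alpha> (x,y)" and \<beta>="\<lambda>y. \<beta> (x',y)"
          and \<gamma>="\<lambda>y. \<gamma> (sup x x',y)" and \<delta>="\<lambda>y. \<delta> (inf x x',y)"])
        (use nn in simp, use nn in simp, use nn in simp, use nn in simp,
         use c[of "(x, _)" "(x', _)"] x in \<open>simp add: sup_Pair_Pair inf_Pair_Pair\<close>)
  qed
  then show "sum \<alpha> (X \<times> Y) * sum \<beta> (X \<times> Y) \<le> sum \<gamma> (X \<times> Y) * sum \<delta> (X \<times> Y)"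
    by (simp add: sF)
qed

lemma AD_transfer:
  assumes "AD X" "bij_betw h X Y"
    "\<And>x y. x \<in> X \<Longrightarrow> y \<in> X \<Longrightarrow> h (sup x y) = sup (h x) (h y) \<and> h (inf x y) = inf (h x) (h y)"
  shows "AD Y"
proof (rule ADI)
  fix \<alpha> \<beta> \<gamma> \<delta> :: "'b \<Rightarrow> real"
  assume nn: "\<And>x. 0 \<le> \<alpha> x" "\<And>x. 0 \<le> \<beta> x" "\<And>x. 0 \<le> \<gamma> x" "\<And>x. 0 \<le> \<delta> x"
    and c: "\<And>x y. x\<in>Y \<Longrightarrow> y\<in>Y \<Longrightarrow> \<alpha> x * \<beta> y \<le> \<gamma> (sup x y) * \<delta> (inf x y)"
  have s: "sum (\<lambda>x. g (h x)) X = sum g Y" for g :: "'b \<Rightarrow> real"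
    using sum.reindex_bij_betw[OF assms(2)] by simp
  have hY: "x \<in> X \<Longrightarrow> h x \<in> Y" for x using assms(2) by (auto simp: bij_betw_def)
  have "sum (\<lambda>x. \<alpha> (h x)) X * sum (\<lambda>x. \<beta> (h x)) X \<le> sum (\<lambda>x. \<gamma> (h x)) X * sum (\<lambda>x. \<delta> (h x)) X"
    by (rule ADD[OF assms(1)]) (use nn c hY assms(3) in auto)
  then show "sum \<alpha> Y * sum \<beta> Y \<le> sum \<gamma> Y * sum \<delta> Y" by (simp add: s)
qed

lemma AD_sub:
  assumes "AD X" "finite X" "Y \<subseteq> X" "\<And>x y. x \<in> Y \<Longrightarrow> y \<in> Y \<Longrightarrow> sup x y \<in> Y \<and> inf x y \<in> Y"
  shows "AD Y"
proof (rule ADI)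
  fix \<alpha> \<beta> \<gamma> \<delta> :: "'a \<Rightarrow> real"
  assume nn: "\<And>x. 0 \<le> \<alpha> x" "\<And>x. 0 \<le> \<beta> x" "\<And>x. 0 \<le> \<gamma> x" "\<And>x. 0 \<le> \<delta> x"
    and c: "\<And>x y. x\<in>Y \<Longrightarrow> y\<in>Y \<Longrightarrow> \<alpha> x * \<beta> y \<le> \<gamma> (sup x y) * \<delta> (inf x y)"
  define R where "R = (\<lambda>(g::'a\<Rightarrow>real) x. if x \<in> Y then g x else 0)"
  have s: "sum (R g) X = sum g Y" for g
    using sum.inter_restrict[OF assms(2), of g Y] assms(3) by (simp add: R_def Int_absorb1)
  have "sum (R \<alpha>) X * sum (R \<beta>) X \<le> sum (R \<gamma>) X * sum (R \<delta>) X"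
  proof (rule ADD[OF assms(1)])
    have "0 \<le> R g x" if "\<And>x. 0 \<le> g x" for g x using that by (simp add: R_def)
    then show "\<And>x. 0 \<le> R \<alpha> x" "\<And>x. 0 \<le> R \<beta> x" "\<And>x. 0 \<le> R \<gamma> x" "\<And>x. 0 \<le> R \<delta> x"
      using nn by blast+
    fix x y assume "x \<in> X" "y \<in> X"
    show "R \<alpha> x * R \<beta> y \<le> R \<gamma> (sup x y) * R \<delta> (inf x y)"
      using c[of x y] assms(4)[of x y] nn by (auto simp: R_def)
  qed
  then show "sum \<alpha> Y * sum \<beta> Y \<le> sum \<gamma> Y * sum \<delta> Y" by (simp add: s)
qed

definition FS :: "'i set \<Rightarrow> ('i \<Rightarrow> int) set" where
  "FS I = {f. (\<forall>i\<in>I. f i \<in> {-1,0,1}) \<and> (\<forall>i. i \<notin> I \<longrightarrow> f i = 0)}"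

lemma AD_FS:
  assumes "finite I"
  shows "AD (FS I) \<and> finite (FS I)"
  using assms
proof (induction I rule: finite_induct)
  case empty
  have e: "FS {} = {\<lambda>_. 0}" by (auto simp: FS_def)
  have "AD (FS {})" unfolding e AD_def by (auto simp: sup_fun_def inf_fun_def)
  then show ?case by (simp add: e)
next
  case (insert i I)
  let ?L = "{-1,0,1::int}"
  let ?h = "\<lambda>(g::'a\<Rightarrow>int,a::int). g(i:=a)"
  have bij: "bij_betw ?h (FS I \<times> ?L) (FS (insert i I))"
  proof (rule bij_betw_byWitness[where f'="\<lambda>f. (f(i:=0), f i)"])
    show "\<forall>a\<in>FS I \<times> ?L. (\<lambda>f. (f(i:=0), f i)) (?h a) = a"
    proof
      fix p assume "p \<in> FS I \<times> ?L"
      then obtain g a where p: "p = (g,a)" "g \<in> FS I" "a \<in> ?L" by blast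
      have "g i = 0" using p(2) insert(2) unfolding FS_def by blast
      then show "(\<lambda>f. (f(i:=0), f i)) (?h p) = p" using p(1) by (simp add: fun_eq_iff)
    qed
    show "\<forall>a'\<in>FS (insert i I). ?h ((\<lambda>f. (f(i:=0), f i)) a') = a'"
      by auto
    show "?h ` (FS I \<times> ?L) \<subseteq> FS (insert i I)"
    proof
      fix f assume "f \<in> ?h ` (FS I \<times> ?L)"
      then obtain q where q: "q \<in> FS I \<times> ?L" "f = ?h q" by blast
      obtain g a where ga: "q = (g,a)" by (cases q)
      have p: "f = g(i:=a)" "g \<in> FS I" "a \<in> ?L" using q ga by auto
      have g1: "\<forall>j\<in>I. g j \<in> ?L" and g2: "\<forall>j. j \<notin> I \<longrightarrow> g j = 0"
        using p(2) unfolding FS_def by blast+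
      have "\<forall>j\<in>insert i I. f j \<in> ?L"
      proof
        fix j assume "j \<in> insert i I"
        then show "f j \<in> ?L" using g1 p(1,3) by (cases "j = i") auto
      qed
      moreover have "\<forall>j. j \<notin> insert i I \<longrightarrow> f j = 0" using g2 p(1) by auto
      ultimately show "f \<in> FS (insert i I)" unfolding FS_def by blast
    qed
    show "(\<lambda>f. (f(i:=0), f i)) ` FS (insert i I) \<subseteq> FS I \<times> ?L"
    proof
      fix p assume "p \<in> (\<lambda>f. (f(i:=0), f i)) ` FS (insert i I)"
      then obtain f where f: "f \<in> FS (insert i I)" "p = (f(i:=0), f i)" by blast
      have f1: "\<forall>j\<in>insert i I. f j \<in> ?L" and f2: "\<forall>j. j \<notin> insert i I \<longrightarrow> f j = 0"
        using f(1) unfolding FS_def by blast+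
      have "\<forall>j\<in>I. (f(i:=0)) j \<in> ?L" using f1 by simp
      moreover have "\<forall>j. j \<notin> I \<longrightarrow> (f(i:=0)) j = 0" using f2 by simp
      ultimately have "f(i:=0) \<in> FS I" unfolding FS_def by blast
      moreover have "f i \<in> ?L" using f1 by blast
      ultimately show "p \<in> FS I \<times> ?L" using f(2) by simp
    qed
  qed
  have "AD (FS I \<times> ?L)" using AD_prod[OF conjunct1[OF insert(3)] AD_chain] by simp
  then have "AD (FS (insert i I))"
  proof (rule AD_transfer[OF _ bij])
    fix p q assume "p \<in> FS I \<times> ?L" "q \<in> FS I \<times> ?L"
    obtain g a g' a' where "p = (g,a)" "q = (g',a')" by (cases p, cases q)
    then show "?h (sup p q) = sup (?h p) (?h q) \<and> ?h (inf p q) = inf (?h p) (?h q)"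
      by (simp add: sup_Pair_Pair inf_Pair_Pair fun_eq_iff)
  qed
  moreover have "finite (FS (insert i I))"
    using bij_betw_finite[OF bij] insert by simp
  ultimately show ?case by simp
qed


definition negf :: "('s \<Rightarrow> int) \<Rightarrow> ('s \<Rightarrow> int)" where
  "negf \<sigma> = (\<lambda>u. - \<sigma> u)"

lemma negf_negf[simp]: "negf (negf \<sigma>) = \<sigma>" by (simp add: negf_def)

lemma sup_negf: "sup (negf a) (negf b) = negf (inf a b)"
  by (simp add: negf_def fun_eq_iff sup_fun_def inf_fun_def sup_max inf_min max_def min_def)

lemma inf_negf: "inf (negf a) (negf b) = negf (sup a b)"
  by (simp add: negf_def fun_eq_iff sup_fun_def inf_fun_def sup_max inf_min max_def min_def)

lemma finite_gbar:
  assumes "finite V" "\<forall>e\<in>E. e \<subseteq> V \<and> card e = 2"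
  shows "finite (gbar V E)"
proof -
  have "E \<subseteq> Pow V" using assms(2) by auto
  then have "finite E" using assms(1) finite_subset by blast
  then show ?thesis using assms(1) by (simp add: gbar_def)
qed

lemma ext_sub_FS:
  assumes "\<forall>e\<in>E. e \<subseteq> V \<and> card e = 2"
  shows "ext_configs V E \<subseteq> FS (gbar V E)"
proof
  fix \<sigma> assume s: "\<sigma> \<in> ext_configs V E"
  have "\<forall>u\<in>gbar V E. \<sigma> u \<in> {-1,0,1}"
  proof
    fix u assume "u \<in> gbar V E"
    then show "\<sigma> u \<in> {-1,0,1}" using s unfolding gbar_def ext_configs_def by auto
  qed
  moreover have "\<forall>u. u \<notin> gbar V E \<longrightarrow> \<sigma> u = 0" using s unfolding ext_configs_def by blast
  ultimately show "\<sigma> \<in> FS (gbar V E)" unfolding FS_def by blast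
qed

lemma ext_closed:
  assumes "\<sigma> \<in> ext_configs V E" "\<sigma>' \<in> ext_configs V E"
  shows "sup \<sigma> \<sigma>' \<in> ext_configs V E \<and> inf \<sigma> \<sigma>' \<in> ext_configs V E"
proof -
  have a1: "\<forall>v\<in>V. \<sigma> (Inl v) \<in> {-1, 1}" "\<forall>e\<in>E. \<sigma> (Inr e) \<in> {-1, 0, 1}"
     "\<forall>e\<in>E. \<forall>v\<in>e. \<bar>\<sigma> (Inl v) - \<sigma> (Inr e)\<bar> \<le> 1" "\<forall>u. u \<notin> gbar V E \<longrightarrow> \<sigma> u = 0"
    using assms(1) unfolding ext_configs_def by blast+
  have a2: "\<forall>v\<in>V. \<sigma>' (Inl v) \<in> {-1, 1}" "\<forall>e\<in>E. \<sigma>' (Inr e) \<in> {-1, 0, 1}"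
     "\<forall>e\<in>E. \<forall>v\<in>e. \<bar>\<sigma>' (Inl v) - \<sigma>' (Inr e)\<bar> \<le> 1" "\<forall>u. u \<notin> gbar V E \<longrightarrow> \<sigma>' u = 0"
    using assms(2) unfolding ext_configs_def by blast+
  have "sup \<sigma> \<sigma>' \<in> ext_configs V E"
    unfolding ext_configs_def
  proof (intro CollectI conjI ballI allI impI)
    fix v assume "v \<in> V" then show "sup \<sigma> \<sigma>' (Inl v) \<in> {-1,1}"
      using a1(1) a2(1) by (auto simp: sup_fun_def sup_max max_def)
  next
    fix e assume "e \<in> E" then show "sup \<sigma> \<sigma>' (Inr e) \<in> {-1,0,1}"
      using a1(2) a2(2) by (auto simp: sup_fun_def sup_max max_def)
  next
    fix e v assume "e \<in> E" "v \<in> e"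
    then have "\<bar>\<sigma> (Inl v) - \<sigma> (Inr e)\<bar> \<le> 1" "\<bar>\<sigma>' (Inl v) - \<sigma>' (Inr e)\<bar> \<le> 1" using a1(3) a2(3) by auto
    then show "\<bar>sup \<sigma> \<sigma>' (Inl v) - sup \<sigma> \<sigma>' (Inr e)\<bar> \<le> 1"
      by (simp add: sup_fun_def sup_max max_def abs_le_iff)
  next
    fix u assume "u \<notin> gbar V E" then show "sup \<sigma> \<sigma>' u = 0" using a1(4) a2(4) by (simp add: sup_fun_def)
  qed
  moreover have "inf \<sigma> \<sigma>' \<in> ext_configs V E"
    unfolding ext_configs_def
  proof (intro CollectI conjI ballI allI impI)
    fix v assume "v \<in> V" then show "inf \<sigma> \<sigma>' (Inl v) \<in> {-1,1}"
      using a1(1) a2(1) by (auto simp: inf_fun_def inf_min min_def)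
  next
    fix e assume "e \<in> E" then show "inf \<sigma> \<sigma>' (Inr e) \<in> {-1,0,1}"
      using a1(2) a2(2) by (auto simp: inf_fun_def inf_min min_def)
  next
    fix e v assume "e \<in> E" "v \<in> e"
    then have "\<bar>\<sigma> (Inl v) - \<sigma> (Inr e)\<bar> \<le> 1" "\<bar>\<sigma>' (Inl v) - \<sigma>' (Inr e)\<bar> \<le> 1" using a1(3) a2(3) by auto
    then show "\<bar>inf \<sigma> \<sigma>' (Inl v) - inf \<sigma> \<sigma>' (Inr e)\<bar> \<le> 1"
      by (simp add: inf_fun_def inf_min min_def abs_le_iff)
  next
    fix u assume "u \<notin> gbar V E" then show "inf \<sigma> \<sigma>' u = 0" using a1(4) a2(4) by (simp add: inf_fun_def)
  qed
  ultimately show ?thesis by blast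
qed

lemma bc_closed:
  assumes "\<sigma> \<in> bc_configs V E A \<xi>" "\<sigma>' \<in> bc_configs V E A \<xi>"
  shows "sup \<sigma> \<sigma>' \<in> bc_configs V E A \<xi> \<and> inf \<sigma> \<sigma>' \<in> bc_configs V E A \<xi>"
proof -
  have e: "\<sigma> \<in> ext_configs V E" "\<sigma>' \<in> ext_configs V E"
    and b: "\<forall>v\<in>A. \<sigma> (Inl v) = \<xi> v" "\<forall>v\<in>A. \<sigma>' (Inl v) = \<xi> v"
    using assms unfolding bc_configs_def by blast+
  have "\<forall>v\<in>A. sup \<sigma> \<sigma>' (Inl v) = \<xi> v" "\<forall>v\<in>A. inf \<sigma> \<sigma>' (Inl v) = \<xi> v"
    using b by (simp_all add: sup_fun_def inf_fun_def)
  then show ?thesis using ext_closed[OF e] unfolding bc_configs_def by blast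
qed


lemma Wt_lat:
  fixes a a' b b' :: int
  assumes "a \<in> {-1,1}" "a' \<in> {-1,1}" "b \<in> {-1,0,1}" "b' \<in> {-1,0,1}"
    "\<bar>a - b\<bar> \<le> 1" "\<bar>a' - b'\<bar> \<le> 1"
  shows "Wt t (max a a') (max b b') * Wt t (min a a') (min b b') = Wt t a b * Wt t a' b'"
  using assms(1-4) apply (simp only: insert_iff empty_iff simp_thms)
  apply (elim disjE)
  using assms(5,6) by (simp_all add: Wt_def)

lemma ext_weight_lat:
  assumes E: "\<forall>e\<in>E. e \<subseteq> V \<and> card e = 2"
    and s: "\<sigma> \<in> ext_configs V E" "\<sigma>' \<in> ext_configs V E"
  shows "ext_weight V E T h (sup \<sigma> \<sigma>') * ext_weight V E T h (inf \<sigma> \<sigma>')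
       = ext_weight V E T h \<sigma> * ext_weight V E T h \<sigma>'"
proof -
  let ?t = "ising_t T"
  let ?P = "\<lambda>\<tau>. \<Prod>e\<in>E. \<Prod>v\<in>e. Wt ?t (\<tau> (Inl v)) (\<tau> (Inr e))"
  let ?X = "\<lambda>\<tau>. exp ((1 / T) * (\<Sum>v\<in>V. h v * of_int (\<tau> (Inl v))))"
  have w: "ext_weight V E T h \<tau> = ?P \<tau> * ?X \<tau>" for \<tau> by (simp add: ext_weight_def)
  have f: "Wt ?t (sup \<sigma> \<sigma>' (Inl v)) (sup \<sigma> \<sigma>' (Inr e)) * Wt ?t (inf \<sigma> \<sigma>' (Inl v)) (inf \<sigma> \<sigma>' (Inr e))
      = Wt ?t (\<sigma> (Inl v)) (\<sigma> (Inr e)) * Wt ?t (\<sigma>' (Inl v)) (\<sigma>' (Inr e))" if "e \<in> E" "v \<in> e" for e v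
  proof -
    have vV: "v \<in> V" using E that by blast
    have s1: "\<forall>v\<in>V. \<sigma> (Inl v) \<in> {-1, 1}" "\<forall>e\<in>E. \<sigma> (Inr e) \<in> {-1, 0, 1}"
     "\<forall>e\<in>E. \<forall>v\<in>e. \<bar>\<sigma> (Inl v) - \<sigma> (Inr e)\<bar> \<le> 1"
      using s(1) unfolding ext_configs_def by blast+
    have s2: "\<forall>v\<in>V. \<sigma>' (Inl v) \<in> {-1, 1}" "\<forall>e\<in>E. \<sigma>' (Inr e) \<in> {-1, 0, 1}"
     "\<forall>e\<in>E. \<forall>v\<in>e. \<bar>\<sigma>' (Inl v) - \<sigma>' (Inr e)\<bar> \<le> 1"
      using s(2) unfolding ext_configs_def by blast+
    have "Wt ?t (max (\<sigma> (Inl v)) (\<sigma>' (Inl v))) (max (\<sigma> (Inr e)) (\<sigma>' (Inr e))) *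
          Wt ?t (min (\<sigma> (Inl v)) (\<sigma>' (Inl v))) (min (\<sigma> (Inr e)) (\<sigma>' (Inr e)))
       = Wt ?t (\<sigma> (Inl v)) (\<sigma> (Inr e)) * Wt ?t (\<sigma>' (Inl v)) (\<sigma>' (Inr e))"
    proof (rule Wt_lat)
      show "\<sigma> (Inl v) \<in> {-1,1}" "\<sigma>' (Inl v) \<in> {-1,1}" using s1(1) s2(1) vV by blast+
      show "\<sigma> (Inr e) \<in> {-1,0,1}" "\<sigma>' (Inr e) \<in> {-1,0,1}" using s1(2) s2(2) that(1) by blast+
      show "\<bar>\<sigma> (Inl v) - \<sigma> (Inr e)\<bar> \<le> 1" "\<bar>\<sigma>' (Inl v) - \<sigma>' (Inr e)\<bar> \<le> 1"
        using s1(3) s2(3) that by blast+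
    qed
    then show ?thesis by (simp only: sup_fun_def inf_fun_def sup_max inf_min)
  qed
  have P: "?P (sup \<sigma> \<sigma>') * ?P (inf \<sigma> \<sigma>') = ?P \<sigma> * ?P \<sigma>'"
    unfolding prod.distrib[symmetric] using f by (intro prod.cong refl) auto
  have "(\<Sum>v\<in>V. h v * of_int (sup \<sigma> \<sigma>' (Inl v))) + (\<Sum>v\<in>V. h v * of_int (inf \<sigma> \<sigma>' (Inl v)))
      = (\<Sum>v\<in>V. h v * of_int (\<sigma> (Inl v))) + (\<Sum>v\<in>V. h v * of_int (\<sigma>' (Inl v)))"
    unfolding sum.distrib[symmetric]
    by (intro sum.cong refl) (simp add: sup_fun_def inf_fun_def sup_max inf_min max_def min_def algebra_simps)
  then have "(1/T) * (\<Sum>v\<in>V. h v * of_int (sup \<sigma> \<sigma>' (Inl v))) + (1/T) * (\<Sum>v\<in>V. h v * of_int (inf \<sigma> \<sigma>' (Inl v)))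
      = (1/T) * (\<Sum>v\<in>V. h v * of_int (\<sigma> (Inl v))) + (1/T) * (\<Sum>v\<in>V. h v * of_int (\<sigma>' (Inl v)))"
    by (simp only: distrib_left[symmetric])
  then have X: "?X (sup \<sigma> \<sigma>') * ?X (inf \<sigma> \<sigma>') = ?X \<sigma> * ?X \<sigma>'"
    by (simp only: exp_add[symmetric])
  have rearr: "(a*b)*(c*d) = (a*c)*(b*d)" for a b c d :: real by (simp add: ac_simps)
  have "ext_weight V E T h (sup \<sigma> \<sigma>') * ext_weight V E T h (inf \<sigma> \<sigma>')
     = (?P (sup \<sigma> \<sigma>') * ?X (sup \<sigma> \<sigma>')) * (?P (inf \<sigma> \<sigma>') * ?X (inf \<sigma> \<sigma>'))" by (simp only: w)
  also have "\<dots> = (?P (sup \<sigma> \<sigma>') * ?P (inf \<sigma> \<sigma>')) * (?X (sup \<sigma> \<sigma>') * ?X (inf \<sigma> \<sigma>'))" by (rule rearr)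
  also have "\<dots> = (?P \<sigma> * ?P \<sigma>') * (?X \<sigma> * ?X \<sigma>')" by (simp only: P X)
  also have "\<dots> = (?P \<sigma> * ?X \<sigma>) * (?P \<sigma>' * ?X \<sigma>')" by (rule rearr)
  also have "\<dots> = ext_weight V E T h \<sigma> * ext_weight V E T h \<sigma>'" by (simp only: w)
  finally show ?thesis .
qed

lemma ising_t_nonneg: "T > 0 \<Longrightarrow> 0 \<le> ising_t T"
  by (simp add: ising_t_def)

lemma ext_weight_nonneg:
  assumes "T > 0" shows "0 \<le> ext_weight V E T h \<sigma>"
  unfolding ext_weight_def using ising_t_nonneg[OF assms]
  by (intro mult_nonneg_nonneg prod_nonneg) (auto simp: Wt_def)

lemma ext_mu_nonneg:
  assumes "T > 0" shows "0 \<le> ext_mu V E T h A \<xi> \<sigma>"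
  unfolding ext_mu_def using ext_weight_nonneg[OF assms]
  by (auto intro!: divide_nonneg_nonneg sum_nonneg)

lemma ext_mu_sum_le1:
  "sum (ext_mu V E T h A \<xi>) (bc_configs V E A \<xi>) \<le> 1"
proof -
  let ?Z = "\<Sum>\<tau>\<in>bc_configs V E A \<xi>. ext_weight V E T h \<tau>"
  have "sum (ext_mu V E T h A \<xi>) (bc_configs V E A \<xi>) = (\<Sum>\<tau>\<in>bc_configs V E A \<xi>. ext_weight V E T h \<tau> / ?Z)"
    by (intro sum.cong refl) (simp add: ext_mu_def)
  also have "\<dots> = ?Z / ?Z" by (rule sum_divide_distrib[symmetric])
  also have "\<dots> \<le> 1" by (cases "?Z = 0") auto
  finally show ?thesis .
qed

lemma ext_mu_lat:
  assumes E: "\<forall>e\<in>E. e \<subseteq> V \<and> card e = 2"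
    and s: "\<sigma> \<in> bc_configs V E A \<xi>" "\<sigma>' \<in> bc_configs V E A \<xi>"
  shows "ext_mu V E T h A \<xi> (sup \<sigma> \<sigma>') * ext_mu V E T h A \<xi> (inf \<sigma> \<sigma>')
       = ext_mu V E T h A \<xi> \<sigma> * ext_mu V E T h A \<xi> \<sigma>'"
proof -
  have c: "sup \<sigma> \<sigma>' \<in> bc_configs V E A \<xi>" "inf \<sigma> \<sigma>' \<in> bc_configs V E A \<xi>" using bc_closed[OF s] by blast+
  have e: "\<sigma> \<in> ext_configs V E" "\<sigma>' \<in> ext_configs V E" using s by (auto simp: bc_configs_def)
  let ?Z = "\<Sum>\<tau>\<in>bc_configs V E A \<xi>. ext_weight V E T h \<tau>"
  have m: "x \<in> bc_configs V E A \<xi> \<Longrightarrow> ext_mu V E T h A \<xi> x = ext_weight V E T h x / ?Z" for x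
    by (simp add: ext_mu_def)
  show ?thesis unfolding m[OF c(1)] m[OF c(2)] m[OF s(1)] m[OF s(2)] times_divide_times_eq
    using ext_weight_lat[OF E e, of T h] by simp
qed


lemma pair_Theta:
  assumes E: "\<forall>e\<in>E. e \<subseteq> V \<and> card e = 2"
    and s: "\<sigma> \<in> ext_configs V E" "\<sigma>' \<in> ext_configs V E"
  shows "pair_config \<sigma> \<sigma>' \<in> Theta_G V E"
proof -
  have f: "\<sigma> \<in> FS (gbar V E)" "\<sigma>' \<in> FS (gbar V E)" using ext_sub_FS[OF E] s by blast+
  have "\<forall>u\<in>gbar V E. \<sigma> u \<in> {-1,0,1}" "\<forall>u\<in>gbar V E. \<sigma>' u \<in> {-1,0,1}"
    "\<forall>u. u \<notin> gbar V E \<longrightarrow> \<sigma> u = 0" "\<forall>u. u \<notin> gbar V E \<longrightarrow> \<sigma>' u = 0"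
    using f unfolding FS_def by blast+
  then show ?thesis unfolding Theta_G_def pair_config_def by simp
qed

lemma incr_step:
  assumes E: "\<forall>e\<in>E. e \<subseteq> V \<and> card e = 2"
    and inc: "increasing_event V E Ev"
    and s: "\<sigma>1 \<in> ext_configs V E" "\<sigma>1' \<in> ext_configs V E" "\<sigma>2 \<in> ext_configs V E" "\<sigma>2' \<in> ext_configs V E"
    and p: "pair_config \<sigma>1 \<sigma>2 \<in> Ev"
  shows "pair_config (sup \<sigma>1 \<sigma>1') (inf \<sigma>2 \<sigma>2') \<in> Ev"
proof -
  have c: "sup \<sigma>1 \<sigma>1' \<in> ext_configs V E" "inf \<sigma>2 \<sigma>2' \<in> ext_configs V E"
    using ext_closed[OF s(1,2)] ext_closed[OF s(3,4)] by blast+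
  have T: "pair_config (sup \<sigma>1 \<sigma>1') (inf \<sigma>2 \<sigma>2') \<in> Theta_G V E" by (rule pair_Theta[OF E c])
  have ge: "\<forall>u\<in>gbar V E. theta_ge (pair_config (sup \<sigma>1 \<sigma>1') (inf \<sigma>2 \<sigma>2') u) (pair_config \<sigma>1 \<sigma>2 u)"
    by (simp add: theta_ge_def pair_config_def sup_fun_def inf_fun_def sup_max inf_min)
  show ?thesis using inc p T ge unfolding increasing_event_def by blast
qed

theorem lemma2p3:
  fixes V :: "'v set" and E :: "'v set set" and A :: "'v set"
    and \<xi>1 \<xi>2 :: "'v \<Rightarrow> int" and h :: "'v \<Rightarrow> real" and T :: real
    and EvA EvB :: "('v site \<Rightarrow> int \<times> int) set"
  assumes "finite V"
    and "\<forall>e\<in>E. e \<subseteq> V \<and> card e = 2"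
    and "A \<subseteq> V"
    and "\<forall>v\<in>A. \<xi>1 v \<in> {-1, 1}"
    and "\<forall>v\<in>A. \<xi>2 v \<in> {-1, 1}"
    and "T > 0"
    and "increasing_event V E EvA"
    and "increasing_event V E EvB"
  shows "prod_prob V E T h A \<xi>1 \<xi>2 (EvA \<inter> EvB)
           \<ge> prod_prob V E T h A \<xi>1 \<xi>2 EvA * prod_prob V E T h A \<xi>1 \<xi>2 EvB"
proof -
  note E = assms(2)
  define S where "S = gbar V E"
  define bc1 where "bc1 = bc_configs V E A \<xi>1"
  define bc2 where "bc2 = bc_configs V E A \<xi>2"
  define m1 where "m1 = ext_mu V E T h A \<xi>1"
  define m2 where "m2 = ext_mu V E T h A \<xi>2"
  define M2 where "M2 = negf ` bc2"
  have finS: "finite S" using finite_gbar[OF assms(1,2)] by (simp add: S_def)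
  have ADS: "AD (FS S)" and finFS: "finite (FS S)" using AD_FS[OF finS] by blast+
  have extS: "ext_configs V E \<subseteq> FS S" using ext_sub_FS[OF E] by (simp add: S_def)
  have bcext: "bc_configs V E A \<xi> \<subseteq> ext_configs V E" for \<xi> by (auto simp: bc_configs_def)
  have AD1: "AD bc1"
  proof (rule AD_sub[OF ADS finFS])
    show "bc1 \<subseteq> FS S" using extS bcext by (auto simp: bc1_def)
    show "\<And>x y. x \<in> bc1 \<Longrightarrow> y \<in> bc1 \<Longrightarrow> sup x y \<in> bc1 \<and> inf x y \<in> bc1"
      unfolding bc1_def by (rule bc_closed)
  qed
  have AD2: "AD M2"
  proof (rule AD_sub[OF ADS finFS])
    show "M2 \<subseteq> FS S"
    proof
      fix x assume "x \<in> M2"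
      then obtain \<sigma> where x: "x = negf \<sigma>" "\<sigma> \<in> bc2" by (auto simp: M2_def)
      then have "\<sigma> \<in> FS S" using extS bcext by (auto simp: bc2_def)
      then have "\<forall>i\<in>S. \<sigma> i \<in> {-1,0,1}" "\<forall>i. i \<notin> S \<longrightarrow> \<sigma> i = 0" unfolding FS_def by blast+
      then have "\<forall>i\<in>S. x i \<in> {-1,0,1}" "\<forall>i. i \<notin> S \<longrightarrow> x i = 0" using x(1) by (auto simp: negf_def)
      then show "x \<in> FS S" unfolding FS_def by blast
    qed
    fix x y assume "x \<in> M2" "y \<in> M2"
    then obtain a b where ab: "x = negf a" "y = negf b" "a \<in> bc2" "b \<in> bc2" by (auto simp: M2_def)
    then have "inf a b \<in> bc2" "sup a b \<in> bc2" using bc_closed[of a V E A \<xi>2 b] by (auto simp: bc2_def)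
    then show "sup x y \<in> M2 \<and> inf x y \<in> M2" using ab by (simp add: sup_negf inf_negf M2_def)
  qed
  have ADP: "AD (bc1 \<times> M2)" by (rule AD_prod[OF AD1 AD2])
  have m1n: "0 \<le> m1 x" for x unfolding m1_def by (rule ext_mu_nonneg[OF assms(6)])
  have m2n: "0 \<le> m2 x" for x unfolding m2_def by (rule ext_mu_nonneg[OF assms(6)])
  define I where "I = (\<lambda>Ev p. if pair_config (fst p) (negf (snd p)) \<in> Ev then m1 (fst p) * m2 (negf (snd p)) else (0::real))"
  define D where "D = (\<lambda>p. m1 (fst p) * m2 (negf (snd p)))"
  have In: "0 \<le> I Ev p" for Ev p using m1n m2n by (simp add: I_def)
  have Dn: "0 \<le> D p" for p using m1n m2n by (simp add: D_def)
  have key: "sum (I EvA) (bc1 \<times> M2) * sum (I EvB) (bc1 \<times> M2) \<le> sum (I (EvA \<inter> EvB)) (bc1 \<times> M2) * sum D (bc1 \<times> M2)"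
  proof (rule ADD[OF ADP In In In Dn])
    fix p q assume pq: "p \<in> bc1 \<times> M2" "q \<in> bc1 \<times> M2"
    obtain \<sigma>1 \<sigma>2 \<sigma>1' \<sigma>2' where pe: "p = (\<sigma>1, negf \<sigma>2)" "q = (\<sigma>1', negf \<sigma>2')"
      and mem: "\<sigma>1 \<in> bc1" "\<sigma>2 \<in> bc2" "\<sigma>1' \<in> bc1" "\<sigma>2' \<in> bc2"
      using pq by (auto simp: M2_def)
    have sp: "sup p q = (sup \<sigma>1 \<sigma>1', negf (inf \<sigma>2 \<sigma>2'))" "inf p q = (inf \<sigma>1 \<sigma>1', negf (sup \<sigma>2 \<sigma>2'))"
      using pe by (simp_all add: sup_Pair_Pair inf_Pair_Pair sup_negf inf_negf)
    have ext: "\<sigma>1 \<in> ext_configs V E" "\<sigma>2 \<in> ext_configs V E" "\<sigma>1' \<in> ext_configs V E" "\<sigma>2' \<in> ext_configs V E"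
      using mem bcext by (auto simp: bc1_def bc2_def)
    have lat1: "m1 (sup \<sigma>1 \<sigma>1') * m1 (inf \<sigma>1 \<sigma>1') = m1 \<sigma>1 * m1 \<sigma>1'"
      using ext_mu_lat[OF E, of \<sigma>1 A \<xi>1 \<sigma>1'] mem by (simp add: m1_def bc1_def)
    have lat2: "m2 (inf \<sigma>2 \<sigma>2') * m2 (sup \<sigma>2 \<sigma>2') = m2 \<sigma>2 * m2 \<sigma>2'"
      using ext_mu_lat[OF E, of \<sigma>2 A \<xi>2 \<sigma>2'] mem by (simp add: m2_def bc2_def mult.commute)
    show "I EvA p * I EvB q \<le> I (EvA \<inter> EvB) (sup p q) * D (inf p q)"
    proof (cases "pair_config \<sigma>1 \<sigma>2 \<in> EvA \<and> pair_config \<sigma>1' \<sigma>2' \<in> EvB")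
      case True
      have "pair_config (sup \<sigma>1 \<sigma>1') (inf \<sigma>2 \<sigma>2') \<in> EvA"
        using incr_step[OF E assms(7) ext(1,3,2,4)] True by blast
      moreover have "pair_config (sup \<sigma>1' \<sigma>1) (inf \<sigma>2' \<sigma>2) \<in> EvB"
        using incr_step[OF E assms(8) ext(3,1,4,2)] True by blast
      ultimately have "pair_config (sup \<sigma>1 \<sigma>1') (inf \<sigma>2 \<sigma>2') \<in> EvA \<inter> EvB"
        by (simp add: sup_commute inf_commute)
      then have "I (EvA \<inter> EvB) (sup p q) * D (inf p q)
          = (m1 (sup \<sigma>1 \<sigma>1') * m1 (inf \<sigma>1 \<sigma>1')) * (m2 (inf \<sigma>2 \<sigma>2') * m2 (sup \<sigma>2 \<sigma>2'))"
        unfolding sp I_def D_def by (simp add: ac_simps)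
      also have "\<dots> = (m1 \<sigma>1 * m1 \<sigma>1') * (m2 \<sigma>2 * m2 \<sigma>2')" by (simp only: lat1 lat2)
      also have "\<dots> = I EvA p * I EvB q" using True unfolding pe I_def by (simp add: ac_simps)
      finally show ?thesis by simp
    next
      case False
      then have "I EvA p * I EvB q = 0" unfolding pe I_def by auto
      moreover have "0 \<le> I (EvA \<inter> EvB) (sup p q) * D (inf p q)"
        using In Dn by (rule mult_nonneg_nonneg)
      ultimately show ?thesis by linarith
    qed
  qed
  define r where "r = (\<lambda>(a::'v site \<Rightarrow> int, b::'v site \<Rightarrow> int). (a, negf b))"
  have bij: "bij_betw r (bc1 \<times> bc2) (bc1 \<times> M2)"
  proof (rule bij_betw_byWitness[where f'=r])
    show "\<forall>a\<in>bc1 \<times> bc2. r (r a) = a" by (auto simp: r_def)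
    show "\<forall>a'\<in>bc1 \<times> M2. r (r a') = a'" by (auto simp: r_def)
    show "r ` (bc1 \<times> bc2) \<subseteq> bc1 \<times> M2" by (auto simp: r_def M2_def)
    show "r ` (bc1 \<times> M2) \<subseteq> bc1 \<times> bc2" by (auto simp: r_def M2_def)
  qed
  have sI: "sum (I Ev) (bc1 \<times> M2) = prod_prob V E T h A \<xi>1 \<xi>2 Ev" for Ev
  proof -
    have "sum (I Ev) (bc1 \<times> M2) = sum (\<lambda>x. I Ev (r x)) (bc1 \<times> bc2)"
      using sum.reindex_bij_betw[OF bij, of "I Ev"] by simp
    also have "\<dots> = prod_prob V E T h A \<xi>1 \<xi>2 Ev"
      unfolding prod_prob_def bc1_def[symmetric] bc2_def[symmetric] m1_def[symmetric] m2_def[symmetric]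
      by (intro sum.cong refl) (auto simp: I_def r_def)
    finally show ?thesis .
  qed
  have sD: "sum D (bc1 \<times> M2) = sum m1 bc1 * sum m2 bc2"
  proof -
    have "sum D (bc1 \<times> M2) = sum (\<lambda>x. D (r x)) (bc1 \<times> bc2)"
      using sum.reindex_bij_betw[OF bij, of D] by simp
    also have "\<dots> = (\<Sum>(a,b)\<in>bc1 \<times> bc2. m1 a * m2 b)"
      by (intro sum.cong refl) (auto simp: D_def r_def)
    also have "\<dots> = sum m1 bc1 * sum m2 bc2"
      by (simp add: sum_product sum.cartesian_product)
    finally show ?thesis .
  qed
  have D1: "sum D (bc1 \<times> M2) \<le> 1"
  proof -
    have a: "sum m1 bc1 \<le> 1" "sum m2 bc2 \<le> 1" unfolding m1_def bc1_def m2_def bc2_def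
      by (rule ext_mu_sum_le1)+
    have b: "0 \<le> sum m1 bc1" "0 \<le> sum m2 bc2" using m1n m2n by (simp_all add: sum_nonneg)
    show ?thesis unfolding sD using a b by (simp add: mult_le_one)
  qed
  have D0: "0 \<le> sum (I (EvA \<inter> EvB)) (bc1 \<times> M2)" using In by (simp add: sum_nonneg)
  have "sum (I (EvA \<inter> EvB)) (bc1 \<times> M2) * sum D (bc1 \<times> M2) \<le> sum (I (EvA \<inter> EvB)) (bc1 \<times> M2)"
    using D0 D1 by (simp add: mult_left_le)
  with key show ?thesis unfolding sI by simp
qed

end
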